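(* Let $F\subseteq\mathbf I$ be finite with $\emptyset\notin F$, and set $f=\sum_{\mathbf i\in F}\delta_{s_{\mathbf i}^*}\in\mathcal A$. Then $\|\pi_{\mathcal J}(f)\|=|F|$ (quotient norm in $\mathcal A/\mathcal J$).
   Context: Let $\mathrm{Cu}_2$ be the involutive monoid with identity $e$ and zero element $\lozenge$ (so $\lozenge t=\lozenge=t\lozenge$ for all $t$), generated by $s_1,s_2,s_1^*,s_2^*$ subject to $s_1^*s_1=e=s_2^*s_2$ and $s_1^*s_2=\lozenge=s_2^*s_1$, with involution $t\mapsto t^*$ satisfying $(t^* )^*=t$, $(tu)^*=u^*t^*$. Let $\mathbf I_0=\{\emptyset\}$, $\mathbf I_n=\{1,2\}^n$, $\mathbf I=\bigcup_{n\ge0}\mathbf I_n$ (finite words). For $\mathbf i=(i_1,\dots,i_k)\in\mathbf I$ put $s_{\mathbf i}=s_{i_1}\cdots s_{i_k}$ ($s_\emptyset=e$) and $s_{\mathbf i}^*=(s_{\mathbf i})^*$. Let $\mathcal A=\ell^1(\mathrm{Cu}_2\setminus\{\lozenge\})$ with product $\#$ determined by bilinearity and continuity from $\delta_s\#\delta_t=\delta_{st}$ if $st\neq\lozenge$ and $\delta_s\#\delta_t=0$ if $st=\lozenge$. Let $f_0=\delta_e-\delta_{s_1s_1^*}-\delta_{s_2s_2^*}$, let $\mathcal J$ be the closed two-sided ideal of $\mathcal A$ generated by $f_0$, and let $\pi_{\mathcal J}:\mathcal A\to\mathcal A/\mathcal J$ be the quotient map. *)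

theory Defs
  imports "HOL-Analysis.Analysis"
begin

datatype gen = S1 | S2

text \<open>Every nonzero element of Cu_2 has a unique normal form s_a s_b^* with a, b
  finite words over {1,2}. We represent Cu_2 as 'cu option': None is the zero
  element (lozenge), Some (a, b) stands for s_a s_b^*.\<close>

type_synonym cu = "gen list \<times> gen list"

definition cu_mul :: "cu \<Rightarrow> cu \<Rightarrow> cu option" where
  "cu_mul x y = (case x of (a, b) \<Rightarrow> case y of (c, d) \<Rightarrow>
     if take (length b) c = b then Some (a @ drop (length b) c, d)
     else if take (length c) b = c then Some (a, d @ drop (length c) b)
     else None)"

definition Cu2_mult :: "cu option \<Rightarrow> cu option \<Rightarrow> cu option" where
  "Cu2_mult x y = (case x of None \<Rightarrow> None | Some u \<Rightarrow>
                     (case y of None \<Rightarrow> None | Some v \<Rightarrow> cu_mul u v))"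

definition Cu2_star :: "cu option \<Rightarrow> cu option" where
  "Cu2_star x = map_option (\<lambda>(a, b). (b, a)) x"

definition Cu2_e :: cu where "Cu2_e = ([], [])"

definition s_word :: "gen list \<Rightarrow> cu" where "s_word i = (i, [])"
definition s_word_star :: "gen list \<Rightarrow> cu" where "s_word_star i = ([], i)"

definition l1 :: "(cu \<Rightarrow> complex) set" where
  "l1 = {f. (\<lambda>x. norm (f x)) summable_on UNIV}"

definition l1norm :: "(cu \<Rightarrow> complex) \<Rightarrow> real" where
  "l1norm f = (\<Sum>\<^sub>\<infinity>x. norm (f x))"

definition delta :: "cu \<Rightarrow> cu \<Rightarrow> complex" where
  "delta s = (\<lambda>x. if x = s then 1 else 0)"

definition conv :: "(cu \<Rightarrow> complex) \<Rightarrow> (cu \<Rightarrow> complex) \<Rightarrow> cu \<Rightarrow> complex" where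
  "conv f g u = (\<Sum>\<^sub>\<infinity>(s, t) \<in> {(s, t). cu_mul s t = Some u}. f s * g t)"

definition f0 :: "cu \<Rightarrow> complex" where
  "f0 = (\<lambda>x. delta Cu2_e x - delta ([S1], [S1]) x - delta ([S2], [S2]) x)"

definition l1_closed :: "(cu \<Rightarrow> complex) set \<Rightarrow> bool" where
  "l1_closed I \<longleftrightarrow> (\<forall>g\<in>l1. (\<forall>e>0. \<exists>h\<in>I. l1norm (\<lambda>x. g x - h x) < e) \<longrightarrow> g \<in> I)"

definition closed_ideal :: "(cu \<Rightarrow> complex) set \<Rightarrow> bool" where
  "closed_ideal I \<longleftrightarrow> I \<subseteq> l1 \<and> (\<lambda>_. 0) \<in> I \<and>
     (\<forall>f\<in>I. \<forall>g\<in>I. (\<lambda>x. f x + g x) \<in> I) \<and>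
     (\<forall>c. \<forall>f\<in>I. (\<lambda>x. c * f x) \<in> I) \<and>
     (\<forall>a\<in>l1. \<forall>f\<in>I. conv a f \<in> I \<and> conv f a \<in> I) \<and>
     l1_closed I"

definition J :: "(cu \<Rightarrow> complex) set" where
  "J = \<Inter>{I. closed_ideal I \<and> f0 \<in> I}"

definition quot_norm :: "(cu \<Rightarrow> complex) \<Rightarrow> real" where
  "quot_norm f = Inf {l1norm (\<lambda>x. f x - g x) | g. g \<in> J}"

end

theory Submission
  imports Defs
begin


definition act :: "cu \<Rightarrow> gen list \<Rightarrow> gen list option" where
  "act x w = (case x of (a,b) \<Rightarrow> if take (length b) w = b then Some (a @ drop (length b) w) else None)"

definition actO :: "cu option \<Rightarrow> gen list \<Rightarrow> gen list option" where
  "actO x w = (case x of None \<Rightarrow> None | Some u \<Rightarrow> act u w)"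

lemma take_prefix_iff: "take (length b) w = b \<longleftrightarrow> (\<exists>v. w = b @ v)"
  by (metis append_eq_conv_conj)

lemma act_app: "act (a,b) (b @ v) = Some (a @ v)"
  by (simp add: act_def)

lemma act_none: "\<not> (\<exists>v. w = b @ v) \<Longrightarrow> act (a,b) w = None"
  by (simp add: act_def take_prefix_iff)

lemma incomparable:
  assumes "\<not> (\<exists>r. c = b @ r)" "\<not> (\<exists>r. b = c @ r)"
  shows "\<not> (\<exists>v. c @ z = b @ v)"
  using assms by (metis append_eq_append_conv2)

lemma cu_mul_cases:
  "(\<exists>r. c = b @ r \<and> cu_mul (a,b) (c,d) = Some (a @ r, d)) \<or>
   (\<not>(\<exists>r. c = b @ r) \<and> (\<exists>r. b = c @ r \<and> cu_mul (a,b) (c,d) = Some (a, d @ r))) \<or>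
   (\<not>(\<exists>r. c = b @ r) \<and> \<not>(\<exists>r. b = c @ r) \<and> cu_mul (a,b) (c,d) = None)"
  unfolding cu_mul_def by (auto simp: take_prefix_iff)

lemma act_mul_core:
  "(case cu_mul (a,b) (c,d) of None \<Rightarrow> None | Some u \<Rightarrow> act u w)
   = (case act (c,d) w of None \<Rightarrow> None | Some v \<Rightarrow> act (a,b) v)"
proof (cases "\<exists>z. w = d @ z")
  case False
  then have R: "act (c,d) w = None" by (rule act_none)
  from cu_mul_cases[of c b a d] show ?thesis
  proof (elim disjE exE conjE)
    fix r assume "cu_mul (a,b) (c,d) = Some (a @ r, d)"
    then show ?thesis using R False by (simp add: act_none)
  next
    fix r assume "cu_mul (a,b) (c,d) = Some (a, d @ r)"
    moreover have "\<not> (\<exists>v. w = (d @ r) @ v)" using False by auto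
    ultimately show ?thesis using R by (simp add: act_none)
  qed (simp add: R)
next
  case True
  then obtain z where w: "w = d @ z" by blast
  have R: "act (c,d) w = Some (c @ z)" by (simp add: w act_app)
  from cu_mul_cases[of c b a d] show ?thesis
  proof (elim disjE exE conjE)
    fix r assume "c = b @ r" "cu_mul (a,b) (c,d) = Some (a @ r, d)"
    then show ?thesis using R w by (simp add: act_app)
  next
    fix r assume h: "b = c @ r" "cu_mul (a,b) (c,d) = Some (a, d @ r)"
    show ?thesis
    proof (cases "\<exists>z'. z = r @ z'")
      case True
      then obtain z' where "z = r @ z'" by blast
      then show ?thesis using h R w act_app[of a "d @ r" z'] act_app[of a "c @ r" z'] by simp
    next
      case False
      then have "\<not> (\<exists>v. w = (d @ r) @ v)" "\<not> (\<exists>v. c @ z = b @ v)" using w h by auto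
      then show ?thesis using h R by (simp add: act_none)
    qed
  next
    assume "\<not>(\<exists>r. c = b @ r)" "\<not>(\<exists>r. b = c @ r)" "cu_mul (a,b) (c,d) = None"
    then show ?thesis using R incomparable[of c b z] by (simp add: act_none)
  qed
qed

lemma act_mul: "actO (Cu2_mult x y) w = (case actO y w of None \<Rightarrow> None | Some v \<Rightarrow> actO x v)"
proof (cases x)
  case (Some u)
  then obtain a b where x: "x = Some (a,b)" by (cases u) auto
  show ?thesis
  proof (cases y)
    case (Some v)
    then obtain c d where y: "y = Some (c,d)" by (cases v) auto
    show ?thesis using act_mul_core[where a=a and b=b and c=c and d=d and w=w]
      by (simp add: x y Cu2_mult_def actO_def split: option.splits)
  qed (simp add: x Cu2_mult_def actO_def)
qed (simp add: Cu2_mult_def actO_def split: option.splits)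

lemma actO_inj: "actO x = actO y \<Longrightarrow> x = y"
proof -
  have dom: "actO (Some (a,b)) w \<noteq> None \<longleftrightarrow> (\<exists>v. w = b @ v)" for a b w
    by (auto simp: actO_def act_def take_prefix_iff)
  have val: "actO (Some (a,b)) b = Some a" for a b
    by (simp add: actO_def act_def)
  assume e: "actO x = actO y"
  show "x = y"
  proof (cases x; cases y)
    fix u v assume xs: "x = Some u" and ys: "y = Some v"
    obtain a b where u: "u = (a,b)" by (cases u) auto
    obtain c d where v: "v = (c,d)" by (cases v) auto
    have e': "actO (Some (a,b)) = actO (Some (c,d))" using e xs ys u v by simp
    have n1: "actO (Some (c,d)) b \<noteq> None" using e' val[of a b] by simp
    obtain t1 where t1: "b = d @ t1" using iffD1[OF dom[of c d b] n1] by (elim exE)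
    have n2: "actO (Some (a,b)) d \<noteq> None" using e' val[of c d] by simp
    obtain t2 where t2: "d = b @ t2" using iffD1[OF dom[of a b d] n2] by (elim exE)
    have "b @ [] = b @ (t2 @ t1)" using t1 t2 by simp
    then have "t2 @ t1 = []" by (simp only: same_append_eq)
    then have "t1 = []" by simp
    then have bd: "b = d" using t1 by simp
    have "Some a = Some c" using val[of a b] val[of c d] fun_cong[OF e', of b] bd by simp
    then have "a = c" by simp
    then show ?thesis using xs ys u v bd by simp
  next
    fix u assume h: "x = Some u" "y = None"
    obtain a b where u: "u = (a,b)" by (cases u) auto
    have "actO x b = Some a" using h u val by simp
    moreover have "actO y b = None" using h by (simp add: actO_def)
    ultimately show ?thesis using e by simp
  next
    fix u assume h: "x = None" "y = Some u"
    obtain a b where u: "u = (a,b)" by (cases u) auto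
    have "actO y b = Some a" using h u val by simp
    moreover have "actO x b = None" using h by (simp add: actO_def)
    ultimately show ?thesis using e by simp
  qed simp
qed

lemma Cu2_assoc: "Cu2_mult (Cu2_mult x y) z = Cu2_mult x (Cu2_mult y z)"
  proof (rule actO_inj, rule ext)
  fix w show "actO (Cu2_mult (Cu2_mult x y) z) w = actO (Cu2_mult x (Cu2_mult y z)) w"
    unfolding act_mul by (cases "actO z w") simp_all
qed



fun psi :: "cu option \<Rightarrow> real" where
  "psi None = 0"
| "psi (Some (p,t)) = (1/2) ^ length p"

definition W :: "cu option \<Rightarrow> cu option \<Rightarrow> cu \<Rightarrow> complex" where
  "W x y u = complex_of_real (psi (Cu2_mult (Cu2_mult x (Some u)) y))"

definition phi :: "cu option \<Rightarrow> cu option \<Rightarrow> (cu \<Rightarrow> complex) \<Rightarrow> complex" where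
  "phi x y g = (\<Sum>\<^sub>\<infinity>u. g u * W x y u)"

lemma psi_nonneg: "0 \<le> psi x"
  by (cases x rule: psi.cases) auto

lemma psi_le1: "psi x \<le> 1"
  by (cases x rule: psi.cases) (auto simp: power_le_one)

lemma norm_W: "norm (W x y u) \<le> 1"
  unfolding W_def using psi_nonneg psi_le1 by simp

lemma l1_summ: "g \<in> l1 \<Longrightarrow> (\<lambda>u. norm (g u)) summable_on UNIV"
  by (simp add: l1_def)

lemma bounded_mult_abs_summable:
  assumes "g \<in> l1" "\<And>u. norm (c u) \<le> 1"
  shows "(\<lambda>u. norm (g u * c u)) summable_on UNIV"
proof (rule summable_on_comparison_test[OF l1_summ[OF assms(1)]])
  fix u
  have "norm (g u * c u) = norm (g u) * norm (c u)" by (simp add: norm_mult)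
  also have "\<dots> \<le> norm (g u)" using assms(2)[of u] by (simp add: mult_left_le)
  finally show "norm (g u * c u) \<le> norm (g u)" .
qed simp

lemma bounded_mult_summable:
  assumes "g \<in> l1" "\<And>u. norm (c u) \<le> 1"
  shows "(\<lambda>u. g u * c u) summable_on UNIV"
  by (rule abs_summable_summable[OF bounded_mult_abs_summable[OF assms]])

lemma phi_summable: "g \<in> l1 \<Longrightarrow> (\<lambda>u. g u * W x y u) summable_on UNIV"
  by (rule bounded_mult_summable) (auto simp: norm_W)

lemma norm_phi: assumes "g \<in> l1" shows "norm (phi x y g) \<le> l1norm g"
proof -
  have "norm (phi x y g) \<le> (\<Sum>\<^sub>\<infinity>u. norm (g u * W x y u))"
    unfolding phi_def
    by (rule norm_infsum_bound, rule bounded_mult_abs_summable[OF assms]) (auto simp: norm_W)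
  also have "\<dots> \<le> (\<Sum>\<^sub>\<infinity>u. norm (g u))"
  proof (rule infsum_mono)
    show "(\<lambda>u. norm (g u * W x y u)) summable_on UNIV"
      by (rule bounded_mult_abs_summable[OF assms]) (auto simp: norm_W)
    show "(\<lambda>u. norm (g u)) summable_on UNIV" by (rule l1_summ[OF assms])
    fix u
    have "norm (g u * W x y u) = norm (g u) * norm (W x y u)" by (simp add: norm_mult)
    also have "\<dots> \<le> norm (g u)" using norm_W[of x y u] by (simp add: mult_left_le)
    finally show "norm (g u * W x y u) \<le> norm (g u)" .
  qed
  finally show ?thesis unfolding l1norm_def .
qed

lemma l1_add: "f \<in> l1 \<Longrightarrow> g \<in> l1 \<Longrightarrow> (\<lambda>x. f x + g x) \<in> l1"
  unfolding l1_def
proof (safe)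
  assume f: "(\<lambda>x. norm (f x)) summable_on UNIV" and g: "(\<lambda>x. norm (g x)) summable_on UNIV"
  show "(\<lambda>x. norm (f x + g x)) summable_on UNIV"
    by (rule summable_on_comparison_test[OF summable_on_add[OF f g]]) (auto simp: norm_triangle_ineq)
qed

lemma l1_scal: "g \<in> l1 \<Longrightarrow> (\<lambda>x. c * g x) \<in> l1"
  unfolding l1_def by (auto simp: norm_mult intro: summable_on_cmult_right)

lemma l1_diff: "f \<in> l1 \<Longrightarrow> g \<in> l1 \<Longrightarrow> (\<lambda>x. f x - g x) \<in> l1"
  using l1_add[of f "\<lambda>x. (-1) * g x"] l1_scal[of g "-1"] by simp

lemma l1_zero: "(\<lambda>_. 0) \<in> l1"
  unfolding l1_def by simp

lemma phi_add: "f \<in> l1 \<Longrightarrow> g \<in> l1 \<Longrightarrow> phi x y (\<lambda>u. f u + g u) = phi x y f + phi x y g"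
  unfolding phi_def distrib_right
  by (rule infsum_add; rule phi_summable)

lemma phi_scal: "phi x y (\<lambda>u. c * g u) = c * phi x y g"
  unfolding phi_def mult.assoc by (rule infsum_cmult_right') 

lemma phi_diff: "f \<in> l1 \<Longrightarrow> g \<in> l1 \<Longrightarrow> phi x y (\<lambda>u. f u - g u) = phi x y f - phi x y g"
  using phi_add[of f "\<lambda>x. (-1) * g x"] l1_scal[of g "-1"] phi_scal[of x y "-1" g] by simp

lemma l1_finite:
  assumes "finite A" "\<And>u. u \<notin> A \<Longrightarrow> g u = 0"
  shows "g \<in> l1"
proof -
  have "(\<lambda>u. norm (g u)) summable_on A" using assms(1) by simp
  moreover have "(\<lambda>u. norm (g u)) summable_on A \<longleftrightarrow> (\<lambda>u. norm (g u)) summable_on UNIV"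
    by (rule summable_on_cong_neutral) (use assms(2) in auto)
  ultimately have "(\<lambda>u. norm (g u)) summable_on UNIV" by simp
  then show ?thesis unfolding l1_def by simp
qed

lemma phi_finite:
  assumes "finite A" "\<And>u. u \<notin> A \<Longrightarrow> g u = 0"
  shows "phi x y g = (\<Sum>u\<in>A. g u * W x y u)"
proof -
  have "phi x y g = (\<Sum>\<^sub>\<infinity>u\<in>A. g u * W x y u)"
    unfolding phi_def by (rule infsum_cong_neutral) (use assms(2) in auto)
  then show ?thesis using assms(1) by simp
qed



lemma mul_e_right: "Cu2_mult x (Some ([],[])) = x"
  by (cases x) (auto simp: Cu2_mult_def cu_mul_def)

lemma mul_e_left: "Cu2_mult (Some ([],[])) x = x"
  by (cases x) (auto simp: Cu2_mult_def cu_mul_def)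

lemma xmul: "cu_mul (p, j#q) ([i],[i]) = (if j = i then Some (p, j#q) else None)"
  by (auto simp: cu_mul_def)

lemma muly: "cu_mul ([i],[i]) (j#r, t) = (if j = i then Some (j#r, t) else None)"
  by (auto simp: cu_mul_def)

lemma key:
  "psi (Cu2_mult x y) = psi (Cu2_mult (Cu2_mult x (Some ([S1],[S1]))) y)
                      + psi (Cu2_mult (Cu2_mult x (Some ([S2],[S2]))) y)"
proof (cases x)
  case None
  then show ?thesis by (simp add: Cu2_mult_def)
next
  case (Some u)
  obtain p q where x: "x = Some (p,q)" using Some by (cases u) auto
  show ?thesis
  proof (cases y)
    case None
    then show ?thesis by (simp add: Cu2_mult_def split: option.splits)
  next
    case (Some v)
    obtain r t where y: "y = Some (r,t)" using Some by (cases v) auto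
    show ?thesis
    proof (cases q)
      case (Cons j q')
      show ?thesis by (cases j) (simp_all add: x Cons Cu2_mult_def xmul)
    next
      case Nil
      show ?thesis
      proof (cases r)
        case (Cons j r')
        show ?thesis unfolding Cu2_assoc
          by (cases j) (simp_all add: x y Cons Cu2_mult_def muly)
      next
        case Nil2: Nil
        show ?thesis by (simp add: x y Nil Nil2 Cu2_mult_def cu_mul_def)
      qed
    qed
  qed
qed

lemma f0_l1: "f0 \<in> l1"
  by (rule l1_finite[where A="{Cu2_e, ([S1],[S1]), ([S2],[S2])}"])
     (auto simp: f0_def delta_def)

lemma phi_f0: "phi x y f0 = 0"
proof -
  have "phi x y f0 = (\<Sum>u\<in>{Cu2_e, ([S1],[S1]), ([S2],[S2])}. f0 u * W x y u)"
    by (rule phi_finite) (auto simp: f0_def delta_def)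
  also have "\<dots> = W x y Cu2_e - W x y ([S1],[S1]) - W x y ([S2],[S2])"
    by (simp add: f0_def delta_def Cu2_e_def)
  also have "\<dots> = 0"
    using key[of x y] by (simp add: W_def Cu2_e_def mul_e_right)
  finally show ?thesis .
qed



definition Pset :: "cu \<Rightarrow> (cu \<times> cu) set" where
  "Pset u = {(s,t). cu_mul s t = Some u}"

definition Qset :: "(cu \<times> cu) set" where
  "Qset = {(s,t). cu_mul s t \<noteq> None}"

lemma conv_alt: "conv a g u = infsum (\<lambda>(s,t). a s * g t) (Pset u)"
  by (simp add: conv_def Pset_def)

lemma prod_abs:
  assumes "a \<in> l1" "g \<in> l1"
  shows "(\<lambda>st. norm (case st of (s,t) \<Rightarrow> a s * g t)) summable_on UNIV"
proof -
  define La where "La = (\<Sum>\<^sub>\<infinity>t. norm (g t))"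
  have row: "((\<lambda>t. norm (case (s,t) of (s,t) \<Rightarrow> a s * g t)) has_sum (norm (a s) * La)) UNIV" for s
  proof -
    have "((\<lambda>t. norm (g t)) has_sum La) UNIV"
      unfolding La_def using l1_summ[OF assms(2)] by (rule has_sum_infsum)
    then have "((\<lambda>t. norm (a s) * norm (g t)) has_sum (norm (a s) * La)) UNIV"
      by (rule has_sum_cmult_right)
    then show ?thesis by (simp add: norm_mult)
  qed
  have "(\<lambda>st. norm (case st of (s,t) \<Rightarrow> a s * g t)) summable_on Sigma UNIV (\<lambda>_. UNIV)"
  proof (rule summable_on_SigmaI[OF row])
    show "(\<lambda>s. norm (a s) * La) summable_on UNIV"
      by (rule summable_on_cmult_left[OF l1_summ[OF assms(1)]])
  qed auto
  then show ?thesis by simp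
qed

lemma prod_bounded_summable:
  assumes "a \<in> l1" "g \<in> l1" "\<And>st. norm (V st) \<le> 1"
  shows "(\<lambda>st. (case st of (s,t) \<Rightarrow> a s * g t) * V st) summable_on A"
proof -
  have "(\<lambda>st. norm ((case st of (s,t) \<Rightarrow> a s * g t) * V st)) summable_on UNIV"
  proof (rule summable_on_comparison_test[OF prod_abs[OF assms(1,2)]])
    fix st
    have "norm ((case st of (s,t) \<Rightarrow> a s * g t) * V st) = norm (case st of (s,t) \<Rightarrow> a s * g t) * norm (V st)"
      by (simp add: norm_mult)
    also have "\<dots> \<le> norm (case st of (s,t) \<Rightarrow> a s * g t)" using assms(3)[of st] by (simp add: mult_left_le)
    finally show "norm ((case st of (s,t) \<Rightarrow> a s * g t) * V st) \<le> norm (case st of (s,t) \<Rightarrow> a s * g t)" .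
  qed simp
  then have "(\<lambda>st. (case st of (s,t) \<Rightarrow> a s * g t) * V st) summable_on UNIV"
    by (rule abs_summable_summable)
  then show ?thesis by (rule summable_on_subset_banach) simp
qed

lemma prod_summable:
  assumes "a \<in> l1" "g \<in> l1"
  shows "(\<lambda>st. case st of (s,t) \<Rightarrow> a s * g t) summable_on A"
  using prod_bounded_summable[OF assms, of "\<lambda>_. 1" A] by simp

lemma snd_inj: "inj_on snd (Sigma UNIV Pset)"
  by (auto simp: inj_on_def Pset_def)

lemma snd_img: "snd ` Sigma UNIV Pset = Qset"
  by (force simp: Pset_def Qset_def image_iff)

lemma sigma_summable:
  assumes "G summable_on Qset"
  shows "(\<lambda>(u, st). G st) summable_on Sigma UNIV Pset"
proof -
  have "(G \<circ> snd) summable_on Sigma UNIV Pset"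
    using assms summable_on_reindex[OF snd_inj, of G] snd_img by simp
  then show ?thesis by (simp add: o_def case_prod_unfold)
qed

lemma sigma_infsum:
  "infsum (\<lambda>(u, st). G st) (Sigma UNIV Pset) = infsum G Qset"
proof -
  have "infsum G Qset = infsum (G \<circ> snd) (Sigma UNIV Pset)"
    using infsum_reindex[OF snd_inj, of G] snd_img by simp
  then show ?thesis by (simp add: o_def case_prod_unfold)
qed

lemma conv_l1:
  assumes "a \<in> l1" "g \<in> l1"
  shows "conv a g \<in> l1"
proof -
  let ?H = "\<lambda>st. case st of (s,t) \<Rightarrow> a s * g t"
  have "(\<lambda>st. norm (?H st)) summable_on Qset"
    by (rule summable_on_subset_banach[OF prod_abs[OF assms]]) simp
  then have "(\<lambda>(u, st). norm (?H st)) summable_on Sigma UNIV Pset"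
    by (rule sigma_summable)
  then have S: "(\<lambda>u. infsum (\<lambda>st. norm (?H st)) (Pset u)) summable_on UNIV"
    using summable_on_Sigma_banach[of "\<lambda>u st. norm (?H st)" UNIV Pset] by simp
  show ?thesis unfolding l1_def
  proof (simp, rule summable_on_comparison_test[OF S])
    fix u
    have "norm (conv a g u) \<le> infsum (\<lambda>st. norm (?H st)) (Pset u)"
      unfolding conv_alt
      by (rule norm_infsum_bound, rule summable_on_subset_banach[OF prod_abs[OF assms]]) simp
    then show "norm (conv a g u) \<le> infsum (\<lambda>st. norm (?H st)) (Pset u)" by simp
  qed simp
qed

definition V :: "cu option \<Rightarrow> cu option \<Rightarrow> cu \<times> cu \<Rightarrow> complex" where
  "V x y st = complex_of_real (psi (Cu2_mult (Cu2_mult x (Cu2_mult (Some (fst st)) (Some (snd st)))) y))"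

lemma norm_V: "norm (V x y st) \<le> 1"
  unfolding V_def using psi_nonneg psi_le1 by simp

lemma phi_conv:
  assumes "a \<in> l1" "g \<in> l1"
  shows "phi x y (conv a g) = infsum (\<lambda>st. (case st of (s,t) \<Rightarrow> a s * g t) * V x y st) UNIV"
proof -
  let ?H = "\<lambda>st. case st of (s,t) \<Rightarrow> a s * g t"
  let ?G = "\<lambda>st. ?H st * V x y st"
  have "phi x y (conv a g) = (\<Sum>\<^sub>\<infinity>u. infsum (\<lambda>st. ?H st * W x y u) (Pset u))"
    unfolding phi_def conv_alt
    by (rule infsum_cong, rule infsum_cmult_left[symmetric], rule prod_summable[OF assms])
  also have "\<dots> = (\<Sum>\<^sub>\<infinity>u. infsum ?G (Pset u))"
  proof (rule infsum_cong, rule infsum_cong)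
    fix u st assume "st \<in> Pset u"
    then have "Cu2_mult (Some (fst st)) (Some (snd st)) = Some u"
      by (auto simp: Pset_def Cu2_mult_def)
    then show "?H st * W x y u = ?G st" by (simp add: W_def V_def)
  qed
  also have "\<dots> = infsum (\<lambda>(u, st). ?G st) (Sigma UNIV Pset)"
    using infsum_Sigma'_banach[of "\<lambda>u st. ?G st" UNIV Pset]
      sigma_summable[OF prod_bounded_summable[OF assms norm_V]] by simp
  also have "\<dots> = infsum ?G Qset" by (rule sigma_infsum)
  also have "\<dots> = infsum ?G UNIV"
  proof (rule infsum_cong_neutral)
    fix st assume "st \<in> UNIV - Qset"
    then have "Cu2_mult (Some (fst st)) (Some (snd st)) = None"
      by (auto simp: Qset_def Cu2_mult_def)
    then show "?G st = 0" by (simp add: V_def Cu2_mult_def split: option.split)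
  qed auto
  finally show ?thesis .
qed


definition K :: "(cu \<Rightarrow> complex) set" where
  "K = {g \<in> l1. \<forall>x y. phi x y g = 0}"

lemma UNIV_pair: "(UNIV :: (cu \<times> cu) set) = Sigma UNIV (\<lambda>_. UNIV)"
  by simp

lemma conv_left:
  assumes "a \<in> l1" "g \<in> K"
  shows "phi x y (conv a g) = 0"
proof -
  have g: "g \<in> l1" using assms(2) by (simp add: K_def)
  let ?G = "\<lambda>st. (case st of (s,t) \<Rightarrow> a s * g t) * V x y st"
  have "phi x y (conv a g) = infsum ?G UNIV" by (rule phi_conv[OF assms(1) g])
  also have "\<dots> = (\<Sum>\<^sub>\<infinity>s. \<Sum>\<^sub>\<infinity>t. ?G (s,t))"
    using infsum_Sigma'_banach[of "\<lambda>s t. ?G (s,t)" UNIV "\<lambda>_. UNIV"]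
      prod_bounded_summable[OF assms(1) g norm_V[of x y], where A="Sigma UNIV (\<lambda>_. UNIV)"]
    by (simp add: case_prod_unfold)
  also have "\<dots> = (\<Sum>\<^sub>\<infinity>s. a s * phi (Cu2_mult x (Some s)) y g)"
  proof (rule infsum_cong)
    fix s
    have "(\<Sum>\<^sub>\<infinity>t. ?G (s,t)) = (\<Sum>\<^sub>\<infinity>t. a s * (g t * W (Cu2_mult x (Some s)) y t))"
      by (rule infsum_cong) (simp add: V_def W_def Cu2_assoc)
    also have "\<dots> = a s * phi (Cu2_mult x (Some s)) y g"
      unfolding phi_def by (rule infsum_cmult_right') 
    finally show "(\<Sum>\<^sub>\<infinity>t. ?G (s,t)) = a s * phi (Cu2_mult x (Some s)) y g" .
  qed
  also have "\<dots> = 0" using assms(2) by (simp add: K_def)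
  finally show ?thesis .
qed

lemma conv_right:
  assumes "a \<in> l1" "g \<in> K"
  shows "phi x y (conv g a) = 0"
proof -
  have g: "g \<in> l1" using assms(2) by (simp add: K_def)
  let ?G = "\<lambda>st. (case st of (s,t) \<Rightarrow> g s * a t) * V x y st"
  have "phi x y (conv g a) = infsum ?G UNIV" by (rule phi_conv[OF g assms(1)])
  also have "\<dots> = (\<Sum>\<^sub>\<infinity>s. \<Sum>\<^sub>\<infinity>t. ?G (s,t))"
    using infsum_Sigma'_banach[of "\<lambda>s t. ?G (s,t)" UNIV "\<lambda>_. UNIV"]
      prod_bounded_summable[OF g assms(1) norm_V[of x y], where A="Sigma UNIV (\<lambda>_. UNIV)"]
    by (simp add: case_prod_unfold)
  also have "\<dots> = (\<Sum>\<^sub>\<infinity>t. \<Sum>\<^sub>\<infinity>s. ?G (s,t))"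
    by (rule infsum_swap_banach)
       (use prod_bounded_summable[OF g assms(1) norm_V[of x y], where A="UNIV \<times> UNIV"] in \<open>simp add: case_prod_unfold\<close>)
  also have "\<dots> = (\<Sum>\<^sub>\<infinity>t. a t * phi x (Cu2_mult (Some t) y) g)"
  proof (rule infsum_cong)
    fix t
    have "(\<Sum>\<^sub>\<infinity>s. ?G (s,t)) = (\<Sum>\<^sub>\<infinity>s. a t * (g s * W x (Cu2_mult (Some t) y) s))"
      by (rule infsum_cong) (simp add: V_def W_def Cu2_assoc)
    also have "\<dots> = a t * phi x (Cu2_mult (Some t) y) g"
      unfolding phi_def by (rule infsum_cmult_right') 
    finally show "(\<Sum>\<^sub>\<infinity>s. ?G (s,t)) = a t * phi x (Cu2_mult (Some t) y) g" .
  qed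
  also have "\<dots> = 0" using assms(2) by (simp add: K_def)
  finally show ?thesis .
qed

lemma K_closed: "l1_closed K"
  unfolding l1_closed_def
proof (intro ballI impI)
  fix g assume g: "g \<in> l1" and app: "\<forall>e>0. \<exists>h\<in>K. l1norm (\<lambda>x. g x - h x) < e"
  have "phi x y g = 0" for x y
  proof (rule ccontr)
    assume ne: "phi x y g \<noteq> 0"
    then have pos: "norm (phi x y g) > 0" by simp
    obtain h where h: "h \<in> K" "l1norm (\<lambda>u. g u - h u) < norm (phi x y g)"
      using app[rule_format, OF pos] by blast
    have hl: "h \<in> l1" using h(1) by (simp add: K_def)
    have "phi x y (\<lambda>u. g u - h u) = phi x y g"
      using phi_diff[OF g hl, of x y] h(1) by (simp add: K_def)
    then have "norm (phi x y g) \<le> l1norm (\<lambda>u. g u - h u)"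
      using norm_phi[OF l1_diff[OF g hl], of x y] by simp
    then show False using h(2) by simp
  qed
  then show "g \<in> K" using g by (simp add: K_def)
qed

lemma K_ideal: "closed_ideal K"
proof -
  have 1: "K \<subseteq> l1" by (auto simp: K_def)
  have 2: "(\<lambda>_. 0) \<in> K" by (simp add: K_def l1_zero phi_def)
  have 3: "\<forall>f\<in>K. \<forall>g\<in>K. (\<lambda>x. f x + g x) \<in> K"
    by (simp add: K_def l1_add phi_add)
  have 4: "\<forall>c. \<forall>f\<in>K. (\<lambda>x. c * f x) \<in> K"
    by (simp add: K_def l1_scal phi_scal)
  have 5: "\<forall>a\<in>l1. \<forall>f\<in>K. conv a f \<in> K \<and> conv f a \<in> K"
  proof (intro ballI conjI)
    fix a f assume a: "a \<in> l1" and f: "f \<in> K"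
    have fl: "f \<in> l1" using f by (simp add: K_def)
    show "conv a f \<in> K" unfolding K_def using conv_left[OF a f] conv_l1[OF a fl] by simp
    show "conv f a \<in> K" unfolding K_def using conv_right[OF a f] conv_l1[OF fl a] by simp
  qed
  show ?thesis unfolding closed_ideal_def using 1 2 3 4 5 K_closed by blast
qed

lemma f0_K: "f0 \<in> K"
  by (simp add: K_def f0_l1 phi_f0)

lemma J_sub_K: "J \<subseteq> K"
  unfolding J_def using K_ideal f0_K by auto



lemma zero_J: "(\<lambda>_. 0) \<in> J"
  unfolding J_def closed_ideal_def by blast

theorem proposition3p19:
  fixes F :: "gen list set"
  assumes "finite F" and "[] \<notin> F"
  shows "quot_norm (\<lambda>x. \<Sum>i\<in>F. delta (s_word_star i) x) = real (card F)"
proof -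
  define fF where "fF = (\<lambda>x. \<Sum>i\<in>F. delta (s_word_star i) x)"
  define A where "A = (\<lambda>i. ([]::gen list, i)) ` F"
  have finA: "finite A" using assms(1) by (simp add: A_def)
  have cardA: "card A = card F" unfolding A_def by (rule card_image) (simp add: inj_on_def)
  have fFv: "fF u = (if u \<in> A then 1 else 0)" for u
  proof (cases u)
    case (Pair p q)
    have "fF u = (\<Sum>i\<in>F. if i = q then (if p = [] then 1 else 0) else 0)"
      unfolding fF_def delta_def s_word_star_def Pair by (rule sum.cong) auto
    also have "\<dots> = (if q \<in> F then (if p = [] then 1 else 0) else 0)"
      using assms(1) by (simp add: sum.delta)
    finally show ?thesis by (auto simp: A_def Pair)
  qed
  have fFl1: "fF \<in> l1"
    by (rule l1_finite[OF finA]) (simp add: fFv)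
  have nfF: "l1norm fF = real (card F)"
  proof -
    have "l1norm fF = (\<Sum>\<^sub>\<infinity>u\<in>A. norm (fF u))"
      unfolding l1norm_def by (rule infsum_cong_neutral) (auto simp: fFv)
    also have "\<dots> = (\<Sum>u\<in>A. 1)" using finA by (simp add: fFv)
    also have "\<dots> = real (card F)" using cardA by simp
    finally show ?thesis .
  qed
  define e where "e = Some (([]::gen list), ([]::gen list))"
  have phiF: "phi e e fF = of_nat (card F)"
  proof -
    have "phi e e fF = (\<Sum>u\<in>A. fF u * W e e u)"
      by (rule phi_finite[OF finA]) (simp add: fFv)
    also have "\<dots> = (\<Sum>u\<in>A. 1)"
    proof (rule sum.cong)
      fix u assume "u \<in> A"
      then obtain i where "u = ([], i)" by (auto simp: A_def)
      then show "fF u * W e e u = 1" using \<open>u \<in> A\<close>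
        by (simp add: fFv W_def e_def mul_e_left mul_e_right)
    qed simp
    also have "\<dots> = of_nat (card F)" using cardA by simp
    finally show ?thesis .
  qed
  have lower: "real (card F) \<le> l1norm (\<lambda>x. fF x - g x)" if "g \<in> J" for g
  proof -
    have gK: "g \<in> K" using J_sub_K that by blast
    then have gl: "g \<in> l1" by (simp add: K_def)
    have "phi e e (\<lambda>x. fF x - g x) = of_nat (card F)"
      using phi_diff[OF fFl1 gl, of e e] phiF gK by (simp add: K_def)
    then have "norm (phi e e (\<lambda>x. fF x - g x)) = real (card F)" by simp
    then show ?thesis using norm_phi[OF l1_diff[OF fFl1 gl], of e e] by simp
  qed
  have "quot_norm fF = real (card F)"
    unfolding quot_norm_def
  proof (rule cInf_eq_minimum)
    show "real (card F) \<in> {l1norm (\<lambda>x. fF x - g x) |g. g \<in> J}"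
      using zero_J nfF by force
    fix z assume "z \<in> {l1norm (\<lambda>x. fF x - g x) |g. g \<in> J}"
    then show "real (card F) \<le> z" using lower by blast
  qed
  then show ?thesis by (simp add: fF_def)
qed

end
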